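(* Let $G$ be a finite group with $|G|\geq3$. Let $\mathcal{C}$ be a cycle of $\mathcal{P}(G)$ of maximum length. Then $\ell(\mathcal{C})\geq\max_{x\in G} o(x)$.
   Context: The power graph $\mathcal{P}(G)$ has vertex set $G$, and distinct $x,y$ are adjacent iff one is a positive integer power of the other. A cycle is a subgraph whose $k\ge3$ distinct vertices can be arranged cyclically with consecutive vertices adjacent; its length $\ell(\mathcal{C})$ is its number of edges ($=k$). $o(x)$ is the order of $x$. *)

theory Defs
  imports "HOL-Algebra.Multiplicative_Group"
begin

definition power_adj :: "('a, 'b) monoid_scheme \<Rightarrow> 'a \<Rightarrow> 'a \<Rightarrow> bool" where
  "power_adj G x y \<longleftrightarrow> x \<in> carrier G \<and> y \<in> carrier G \<and> x \<noteq> y \<and>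
     ((\<exists>n::nat. n > 0 \<and> y = x [^]\<^bsub>G\<^esub> n) \<or> (\<exists>n::nat. n > 0 \<and> x = y [^]\<^bsub>G\<^esub> n))"

text \<open>A cycle of the power graph, given as the cyclic list of its k >= 3 distinct vertices;
  its length (number of edges) is the length of the list.\<close>
definition power_graph_cycle :: "('a, 'b) monoid_scheme \<Rightarrow> 'a list \<Rightarrow> bool" where
  "power_graph_cycle G cs \<longleftrightarrow> length cs \<ge> 3 \<and> distinct cs \<and> set cs \<subseteq> carrier G \<and>
     (\<forall>i < length cs. power_adj G (cs ! i) (cs ! ((i + 1) mod length cs)))"

end

theory Submission
  imports Defs "HOL-Computational_Algebra.Primes" "HOL-Number_Theory.Cong"
begin


definition relg :: "nat \<Rightarrow> nat \<Rightarrow> nat \<Rightarrow> bool" where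
  "relg n a b \<longleftrightarrow> gcd a n dvd gcd b n \<or> gcd b n dvd gcd a n"

definition fiber :: "nat \<Rightarrow> nat \<Rightarrow> nat \<Rightarrow> nat set" where
  "fiber P m c = {c + j*m | j. j < P}"

definition fibl :: "nat \<Rightarrow> nat \<Rightarrow> nat \<Rightarrow> nat \<Rightarrow> nat list" where
  "fibl P m e c = e # filter (\<lambda>x. x \<noteq> e) (map (\<lambda>j. c + j*m) [0..<P])"

definition entry :: "nat \<Rightarrow> nat \<Rightarrow> nat \<Rightarrow> nat \<Rightarrow> nat" where
  "entry P m prev c = (if gcd prev m dvd gcd c m then (SOME x. x \<in> fiber P m c \<and> x mod P = 0)
     else (SOME x. x \<in> fiber P m c \<and> x mod P = 1))"

fun build :: "nat \<Rightarrow> nat \<Rightarrow> nat \<Rightarrow> nat list \<Rightarrow> nat list" where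
  "build P m prev [] = []"
| "build P m prev (c # cs) = fibl P m (entry P m prev c) c @ build P m c cs"

lemma fiber_hit:
  assumes "coprime m P" "P > 0" "r < P"
  shows "\<exists>x \<in> fiber P m c. x mod P = r"
proof -
  let ?f = "\<lambda>j. (c + j*m) mod P"
  have inj: "inj_on ?f {0..<P}"
  proof (rule inj_onI)
    fix i j assume i: "i \<in> {0..<P}" and j: "j \<in> {0..<P}" and eq: "?f i = ?f j"
    have "[c + i*m = c + j*m] (mod P)" using eq by (simp add: cong_def)
    hence "[i*m = j*m] (mod P)" by (simp add: cong_add_lcancel_nat)
    hence "[i = j] (mod P)" using assms(1) cong_mult_rcancel_nat
      by (metis coprime_commute)
    thus "i = j" using i j by (simp add: cong_def)
  qed
  have "?f ` {0..<P} \<subseteq> {0..<P}" using assms by auto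
  moreover have "card (?f ` {0..<P}) = card {0..<P::nat}" using card_image[OF inj] by simp
  ultimately have "?f ` {0..<P} = {0..<P}"
    by (simp add: card_subset_eq)
  hence "r \<in> ?f ` {0..<P}" using assms by auto
  then obtain j where "j < P" "(c + j*m) mod P = r" by auto
  thus ?thesis unfolding fiber_def by blast
qed

lemma gcd_coprime_split:
  fixes x P m :: nat
  assumes "coprime P m"
  shows "gcd x (P*m) = gcd x P * gcd x m"
proof (rule dvd_antisym)
  have c: "coprime (gcd x P) (gcd x m)"
    by (rule coprime_divisors[OF gcd_dvd2 gcd_dvd2 assms])
  show "gcd x P * gcd x m dvd gcd x (P*m)"
    using c by (simp add: divides_mult mult_dvd_mono)
  have e: "gcd x P * gcd x m = gcd (gcd x P * x) (gcd x P * m)"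
    by (simp add: gcd_mult_distrib_nat)
  have "gcd x (P*m) dvd gcd x P * m"
  proof -
    have "gcd x (P*m) dvd gcd (x*m) (P*m)" by (simp add: dvd_mult2)
    also have "gcd (x*m) (P*m) = gcd x P * m" by (metis gcd_mult_distrib_nat mult.commute)
    finally show ?thesis .
  qed
  moreover have "gcd x (P*m) dvd gcd x P * x" by simp
  ultimately show "gcd x (P*m) dvd gcd x P * gcd x m" unfolding e by simp
qed

lemma succ_all: "(\<forall>x\<in>set xs. \<forall>y\<in>set xs. R x y) \<Longrightarrow> successively R xs"
  by (induction xs rule: induct_list012) auto

lemma fiber_gcd_m: "x \<in> fiber P m c \<Longrightarrow> gcd x m = gcd c m"
  unfolding fiber_def by (auto simp: gcd.commute[of _ m]) (metis gcd_add_mult add.commute)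

lemma fiber_mod_m: "x \<in> fiber P m c \<Longrightarrow> x mod m = c mod m"
  unfolding fiber_def by auto

lemma primepow_dvd_cases:
  fixes p :: nat
  assumes "prime p" "u dvd p^a" "v dvd p^a"
  shows "u dvd v \<or> v dvd u"
proof -
  obtain i where "u = p^i" using assms divides_primepow_nat by blast
  moreover obtain j where "v = p^j" using assms divides_primepow_nat by blast
  ultimately show ?thesis
    using le_imp_power_dvd[of i j p] le_imp_power_dvd[of j i p] by (cases "i \<le> j") auto
qed

locale setup_nt =
  fixes p a m :: nat
  assumes p: "prime p" and a: "a \<ge> 1" and m: "m \<ge> 1" and cop: "coprime (p^a) m"
begin

abbreviation "P \<equiv> p^a"
abbreviation "n \<equiv> p^a * m"

lemma P2: "P \<ge> 2"
proof -
  have "p \<ge> 2" using p prime_ge_2_nat by blast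
  hence "p^1 \<le> p^a" using a by (intro power_increasing) auto
  thus ?thesis using \<open>p \<ge> 2\<close> by simp
qed

lemma fiber_gcd: "x \<in> fiber P m c \<Longrightarrow> gcd x n = gcd x P * gcd c m"
  using gcd_coprime_split[OF cop] fiber_gcd_m by metis

lemma fiber_rel: "x \<in> fiber P m c \<Longrightarrow> y \<in> fiber P m c \<Longrightarrow> relg n x y"
proof -
  assume x: "x \<in> fiber P m c" and y: "y \<in> fiber P m c"
  have "gcd x P dvd gcd y P \<or> gcd y P dvd gcd x P"
    using primepow_dvd_cases[OF p, of "gcd x P" a "gcd y P"] by simp
  thus ?thesis unfolding relg_def fiber_gcd[OF x] fiber_gcd[OF y] by auto
qed

lemma entry_props:
  "entry P m prev c \<in> fiber P m c \<and>
   (gcd prev m dvd gcd c m \<longrightarrow> entry P m prev c mod P = 0) \<and>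
   (\<not> gcd prev m dvd gcd c m \<longrightarrow> entry P m prev c mod P = 1)"
proof -
  have cop': "coprime m P" using cop by (simp add: coprime_commute)
  have P0: "P > 0" using P2 by linarith
  have P1: "1 < P" using P2 by linarith
  have e0: "\<exists>x. x \<in> fiber P m c \<and> x mod P = 0" using fiber_hit[of m P 0 c] cop' P0 by auto
  have e1: "\<exists>x. x \<in> fiber P m c \<and> x mod P = 1" using fiber_hit[of m P 1 c] cop' P0 P1 by auto
  have s0: "(SOME x. x \<in> fiber P m c \<and> x mod P = 0) \<in> fiber P m c \<and> (SOME x. x \<in> fiber P m c \<and> x mod P = 0) mod P = 0"
    by (rule someI_ex[OF e0])
  have s1: "(SOME x. x \<in> fiber P m c \<and> x mod P = 1) \<in> fiber P m c \<and> (SOME x. x \<in> fiber P m c \<and> x mod P = 1) mod P = 1"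
    by (rule someI_ex[OF e1])
  show ?thesis unfolding entry_def using s0 s1 by auto
qed

lemma transition:
  assumes x: "x \<in> fiber P m c" and r: "relg m c c'"
  shows "relg n x (entry P m c c')"
proof -
  let ?e = "entry P m c c'"
  have ef: "?e \<in> fiber P m c'" using entry_props by blast
  show ?thesis
  proof (cases "gcd c m dvd gcd c' m")
    case True
    hence "?e mod P = 0" using entry_props by blast
    hence "P dvd ?e" by (simp add: dvd_eq_mod_eq_0)
    hence "gcd ?e P = P" by (meson dvd_antisym gcd_dvd2 gcd_greatest dvd_refl)
    hence e: "gcd ?e n = P * gcd c' m" using fiber_gcd[OF ef] by simp
    have xg: "gcd x n = gcd x P * gcd c m" using fiber_gcd[OF x] .
    have "gcd x P * gcd c m dvd P * gcd c' m"
      by (rule mult_dvd_mono) (use True in auto)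
    thus ?thesis unfolding relg_def e xg by (rule disjI1)
  next
    case False
    hence "?e mod P = 1" using entry_props by blast
    hence "gcd ?e P = 1" by (metis gcd.commute gcd_red_nat gcd_1_nat)
    hence e: "gcd ?e n = gcd c' m" using fiber_gcd[OF ef] by simp
    have xg: "gcd x n = gcd x P * gcd c m" using fiber_gcd[OF x] .
    have "gcd c' m dvd gcd c m" using False r unfolding relg_def by blast
    hence "gcd c' m dvd gcd x P * gcd c m" by (rule dvd_mult)
    thus ?thesis unfolding relg_def e xg by (rule disjI2)
  qed
qed


lemma fibl_set: "e \<in> fiber P m c \<Longrightarrow> set (fibl P m e c) = fiber P m c"
  unfolding fibl_def fiber_def by auto

lemma fibl_distinct: "distinct (fibl P m e c)"
proof -
  have "inj_on (\<lambda>j. c + j*m) {0..<P}" using m by (auto simp: inj_on_def)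
  hence "distinct (map (\<lambda>j. c + j*m) [0..<P])" by (simp add: distinct_map)
  thus ?thesis unfolding fibl_def by auto
qed

lemma fibl_succ: "e \<in> fiber P m c \<Longrightarrow> successively (relg n) (fibl P m e c)"
  by (rule succ_all) (simp add: fibl_set fiber_rel)

lemma fibl_hd: "fibl P m e c \<noteq> [] \<and> hd (fibl P m e c) = e"
  unfolding fibl_def by simp

lemma build_set: "set (build P m prev cs) = (\<Union>c\<in>set cs. fiber P m c)"
  by (induction cs arbitrary: prev) (auto simp: fibl_set entry_props)

lemma build_hd: "cs \<noteq> [] \<Longrightarrow> hd (build P m prev cs) = entry P m prev (hd cs)"
  by (cases cs) (auto simp: fibl_hd)

lemma build_succ: "successively (relg m) (prev # cs) \<Longrightarrow> successively (relg n) (build P m prev cs)"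
proof (induction cs arbitrary: prev)
  case Nil
  then show ?case by simp
next
  case (Cons c cs)
  have s1: "successively (relg m) (c # cs)" using Cons.prems by (simp add: successively_Cons)
  have ef: "entry P m prev c \<in> fiber P m c" using entry_props by blast
  have A: "successively (relg n) (fibl P m (entry P m prev c) c)" using fibl_succ[OF ef] .
  have B: "successively (relg n) (build P m c cs)" using Cons.IH[OF s1] .
  have C: "relg n (last (fibl P m (entry P m prev c) c)) (hd (build P m c cs))" if ne: "cs \<noteq> []"
  proof -
    obtain c' cs' where cs: "cs = c' # cs'" using ne by (cases cs) auto
    have r: "relg m c c'" using s1 cs by simp
    have "last (fibl P m (entry P m prev c) c) \<in> fiber P m c"
      using fibl_set[OF ef] fibl_hd[of "entry P m prev c" c] last_in_set by metis
    hence "relg n (last (fibl P m (entry P m prev c) c)) (entry P m c c')"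
      using transition r by blast
    thus ?thesis using build_hd[of cs c] cs by simp
  qed
  have "build P m c cs = [] \<longleftrightarrow> cs = []" by (cases cs) (auto simp: fibl_hd)
  then show ?case using A B C by (auto simp: successively_append_iff)
qed

lemma build_distinct: "distinct cs \<Longrightarrow> \<forall>c\<in>set cs. c < m \<Longrightarrow> distinct (build P m prev cs)"
proof (induction cs arbitrary: prev)
  case Nil
  then show ?case by simp
next
  case (Cons c cs)
  have ef: "entry P m prev c \<in> fiber P m c" using entry_props by blast
  have disj: "fiber P m c \<inter> (\<Union>c'\<in>set cs. fiber P m c') = {}"
  proof (rule ccontr)
    assume "fiber P m c \<inter> (\<Union>c'\<in>set cs. fiber P m c') \<noteq> {}"
    then obtain x c' where x: "x \<in> fiber P m c" "c' \<in> set cs" "x \<in> fiber P m c'" by blast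
    have "c mod m = c' mod m" using fiber_mod_m[OF x(1)] fiber_mod_m[OF x(3)] by simp
    hence "c = c'" using Cons.prems x(2) by simp
    thus False using Cons.prems x(2) by simp
  qed
  show ?case using Cons disj fibl_distinct[of "entry P m prev c" c]
    by (simp add: fibl_set[OF ef] build_set)
qed

end

lemma exists_path: "n \<ge> 1 \<Longrightarrow> \<exists>L. distinct L \<and> set L = {1..<n} \<and> successively (relg n) L"
proof (induction n rule: less_induct)
  case (less n)
  show ?case
  proof (cases "n = 1")
    case True
    then show ?thesis by (intro exI[of _ "[]"]) auto
  next
    case False
    then obtain p where p: "prime p" "p dvd n" using prime_factor_nat by blast
    define a where "a = multiplicity p n"
    define m where "m = n div p^a"
    have n0: "n \<noteq> 0" using less.prems by simp
    have nm: "n = p^a * m" unfolding m_def a_def using multiplicity_dvd[of p n] by simp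
    have a1: "a \<ge> 1" unfolding a_def using multiplicity_gt_zero_iff[of n p] n0 p prime_gt_1_nat[of p] by auto
    have ndvd: "\<not> p dvd m" unfolding m_def a_def by (rule multiplicity_decompose) (use n0 p prime_gt_1_nat[of p] in auto)
    have "coprime p m" using p(1) ndvd by (simp add: prime_imp_coprime)
    hence cop: "coprime (p^a) m" by simp
    have m1: "m \<ge> 1" using n0 nm by (cases m) auto
    have p2: "p \<ge> 2" using p(1) prime_ge_2_nat by blast
    have P2: "p^a \<ge> 2"
    proof -
      have "p^1 \<le> p^a" using a1 p2 by (intro power_increasing) auto
      thus ?thesis using p2 by simp
    qed
    have "1*m < p^a*m" using P2 m1 by (intro mult_strict_right_mono) auto
    hence mn: "m < n" using nm by simp
    obtain Lm where Lm: "distinct Lm" "set Lm = {1..<m}" "successively (relg m) Lm"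
      using less.IH[OF mn m1] by blast
    interpret setup_nt p a m using p(1) a1 m1 cop by unfold_locales auto
    define Z where "Z = map (\<lambda>j. j*m) [1..<P]"
    define L where "L = Z @ build P m 0 Lm"
    have Zf: "set Z \<subseteq> fiber P m 0" unfolding Z_def fiber_def by auto
    have "1 < p^a" using P2 by linarith
    hence Zne: "Z \<noteq> []" unfolding Z_def using p2 by simp
    have r0: "successively (relg m) (0 # Lm)"
      using Lm(3) by (cases Lm) (auto simp: relg_def)
    have sZ: "successively (relg n) Z"
      by (rule succ_all) (use Zf fiber_rel[of _ 0] nm in auto)
    have junction: "relg n (last Z) (hd (build P m 0 Lm))" if ne: "Lm \<noteq> []"
    proof -
      have "last Z \<in> fiber P m 0" using Zf Zne last_in_set by blast
      moreover have "relg m 0 (hd Lm)" using r0 ne by (cases Lm) auto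
      ultimately have "relg (p^a*m) (last Z) (entry P m 0 (hd Lm))" using transition by blast
      thus ?thesis using build_hd[OF ne] nm by simp
    qed
    have bne: "build P m 0 Lm = [] \<longleftrightarrow> Lm = []" by (cases Lm) (auto simp: fibl_hd)
    have succ: "successively (relg n) L"
      unfolding L_def using sZ build_succ[OF r0] junction bne nm
      by (auto simp: successively_append_iff)
    have dZ: "distinct Z" unfolding Z_def using m1 by (auto simp: distinct_map inj_on_def)
    have dB: "distinct (build P m 0 Lm)" using build_distinct[OF Lm(1)] Lm(2) by auto
    have setB: "set (build P m 0 Lm) = (\<Union>c\<in>{1..<m}. fiber P m c)" using build_set Lm(2) by simp
    have disjZB: "set Z \<inter> set (build P m 0 Lm) = {}"
    proof -
      have "x mod m = 0" if "x \<in> set Z" for x using that unfolding Z_def by auto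
      moreover have "x mod m \<noteq> 0" if "x \<in> set (build P m 0 Lm)" for x
      proof -
        have "x \<in> (\<Union>c\<in>{1..<m}. fiber P m c)" using that unfolding setB .
        then obtain c where c: "c \<in> {1..<m}" "x \<in> fiber P m c" by blast
        have "x mod m = c" using fiber_mod_m[OF c(2)] c(1) by simp
        thus ?thesis using c(1) by simp
      qed
      ultimately show ?thesis by (metis disjoint_iff)
    qed
    have dist: "distinct L" unfolding L_def using dZ dB disjZB by simp
    have setL: "set L = {1..<n}"
    proof
      show "set L \<subseteq> {1..<n}"
      proof
        fix x assume "x \<in> set L"
        hence "x \<in> set Z \<or> x \<in> set (build P m 0 Lm)" unfolding L_def by simp
        thus "x \<in> {1..<n}"
        proof
          assume "x \<in> set Z"
          then obtain j where j: "1 \<le> j" "j < P" "x = j*m" unfolding Z_def by auto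
          have "j*m < P*m" using j m1 by simp
          moreover have "1 \<le> j*m" using j m1 by simp
          ultimately show ?thesis using j nm by simp
        next
          assume "x \<in> set (build P m 0 Lm)"
          then obtain c j where c: "1 \<le> c" "c < m" "j < P" "x = c + j*m" using setB unfolding fiber_def by auto
          have "c + j*m < m + j*m" using c by simp
          also have "... = (j+1)*m" by simp
          also have "... \<le> P*m" using c(3) by (intro mult_le_mono1) simp
          finally show ?thesis using c nm by simp
        qed
      qed
    next
      show "{1..<n} \<subseteq> set L"
      proof
        fix x assume x: "x \<in> {1..<n}"
        have xd: "x div m < P" using x nm m1 by (simp add: div_less_iff_less_mult)
        show "x \<in> set L"
        proof (cases "x mod m = 0")
          case True
          have xe: "x = (x div m) * m" using True div_mult_mod_eq[of x m] by simp
          have "x div m \<noteq> 0"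
          proof
            assume "x div m = 0" then have "x = 0" using xe by simp
            thus False using x by simp
          qed
          hence "x div m \<ge> 1" by simp
          hence "x \<in> set Z" unfolding Z_def using xd xe by (auto intro!: image_eqI[of _ _ "x div m"])
          thus ?thesis unfolding L_def by simp
        next
          case False
          have "x mod m < m" using m1 by simp
          hence "x mod m \<in> {1..<m}" using False by simp
          moreover have "x \<in> fiber P m (x mod m)" unfolding fiber_def using xd
            by (auto intro!: exI[of _ "x div m"])
          ultimately show ?thesis unfolding L_def using setB by auto
        qed
      qed
    qed
    show ?thesis using dist setL succ by blast
  qed
qed



lemma pow_from_gcd:
  assumes gr: "group G" and x: "x \<in> carrier G" and n: "n = group.ord G x" "n > 0"
    and d: "gcd a n dvd gcd b n"
  shows "\<exists>j::nat. j > 0 \<and> x [^]\<^bsub>G\<^esub> b = (x [^]\<^bsub>G\<^esub> a) [^]\<^bsub>G\<^esub> j"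
proof -
  interpret group G by (rule gr)
  have pw: "x [^]\<^bsub>G\<^esub> (n*w) = \<one>\<^bsub>G\<^esub>" for w :: nat
    using x n by (simp add: pow_eq_id)
  have "gcd a n dvd b" using d by (meson dvd_trans gcd_dvd1)
  then obtain t where t: "b = gcd a n * t" by blast
  show ?thesis
  proof (cases "a = 0")
    case True
    hence "n dvd b" using t by simp
    then obtain w where "b = n * w" by blast
    hence "x [^]\<^bsub>G\<^esub> b = \<one>\<^bsub>G\<^esub>" using pw by simp
    thus ?thesis using True by (intro exI[of _ 1]) simp
  next
    case False
    obtain u v where uv: "a * u = n * v + gcd a n" using bezout_nat[OF False] by blast
    have ar: "a * (u*t + n) = n * (v*t + a) + b"
    proof -
      have "a * (u*t + n) = (a*u)*t + n*a" by (simp add: algebra_simps)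
      also have "... = (n*v + gcd a n)*t + n*a" using uv by simp
      also have "... = n * (v*t + a) + b" using t by (simp add: algebra_simps)
      finally show ?thesis .
    qed
    have "(x [^]\<^bsub>G\<^esub> a) [^]\<^bsub>G\<^esub> (u*t + n) = x [^]\<^bsub>G\<^esub> (a * (u*t+n))" using x by (simp add: nat_pow_pow)
    also have "... = x [^]\<^bsub>G\<^esub> (n * (v*t + a)) \<otimes>\<^bsub>G\<^esub> x [^]\<^bsub>G\<^esub> b" unfolding ar using x by (simp add: nat_pow_mult)
    also have "... = x [^]\<^bsub>G\<^esub> b" using pw x by simp
    finally show ?thesis using n by (intro exI[of _ "u*t+n"]) auto
  qed
qed

lemma adj_from_relg:
  assumes gr: "group G" and x: "x \<in> carrier G" and n: "n = group.ord G x" "n > 0"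
    and r: "relg n a b" and ne: "x [^]\<^bsub>G\<^esub> a \<noteq> x [^]\<^bsub>G\<^esub> b"
  shows "power_adj G (x [^]\<^bsub>G\<^esub> a) (x [^]\<^bsub>G\<^esub> b)"
proof -
  interpret group G by (rule gr)
  show ?thesis
    using r pow_from_gcd[OF gr x n, of a b] pow_from_gcd[OF gr x n, of b a] x ne
    unfolding power_adj_def relg_def by auto
qed

theorem mainTheorem4:
  fixes G :: "('a, 'b) monoid_scheme" and cs :: "'a list"
  assumes "group G" and "finite (carrier G)" and "card (carrier G) \<ge> 3"
    and "power_graph_cycle G cs"
    and "\<forall>ds. power_graph_cycle G ds \<longrightarrow> length ds \<le> length cs"
  shows "length cs \<ge> Max (group.ord G ` carrier G)"
proof -
  interpret group G by (rule assms(1))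
  have l3: "length cs \<ge> 3" using assms(4) unfolding power_graph_cycle_def by simp
  have "carrier G \<noteq> {}" by auto
  hence "Max (ord ` carrier G) \<in> ord ` carrier G" using assms(2) by (intro Max_in) auto
  then obtain x where x: "x \<in> carrier G" and xM: "ord x = Max (ord ` carrier G)" by auto
  define n where "n = ord x"
  show ?thesis
  proof (cases "n \<le> 2")
    case True
    thus ?thesis using l3 xM n_def by simp
  next
    case False
    hence n3: "n \<ge> 3" by simp
    obtain L where L: "distinct L" "set L = {1..<n}" "successively (relg n) L"
      using exists_path[of n] n3 by auto
    define K where "K = 0 # L"
    define ds where "ds = map (\<lambda>k. x [^]\<^bsub>G\<^esub> k) K"
    have lenL: "length L = n - 1" using distinct_card[OF L(1)] L(2) by simp
    have lenK: "length K = n" unfolding K_def using lenL n3 by simp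
    have setK: "set K = {0..<n}" unfolding K_def using L(2) n3 by auto
    have dK: "distinct K" unfolding K_def using L by auto
    have inj: "inj_on (\<lambda>k. x [^]\<^bsub>G\<^esub> k) (set K)"
    proof -
      have "set K \<subseteq> {0..ord x - 1}" using setK n_def by auto
      thus ?thesis using ord_inj[OF x] inj_on_subset by blast
    qed
    have dds: "distinct ds" unfolding ds_def using dK inj by (simp add: distinct_map)
    have lends: "length ds = n" unfolding ds_def using lenK by simp
    have relK: "relg n (K ! i) (K ! ((i+1) mod n))" if i: "i < n" for i
    proof (cases "i + 1 < n")
      case True
      show ?thesis
      proof (cases i)
        case 0
        thus ?thesis unfolding K_def relg_def by simp
      next
        case (Suc i')
        have "Suc i' < length L" using True Suc lenL by simp
        hence "relg n (L ! i') (L ! Suc i')" using successively_nth[OF L(3)] by blast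
        thus ?thesis using Suc True unfolding K_def by simp
      qed
    next
      case False
      hence "i + 1 = n" using i by simp
      hence "(i+1) mod n = 0" by simp
      thus ?thesis unfolding K_def relg_def by (simp add: nth_Cons')
    qed
    have cyc: "power_graph_cycle G ds"
      unfolding power_graph_cycle_def
    proof (intro conjI allI impI)
      show "3 \<le> length ds" using lends n3 by simp
      show "distinct ds" by (rule dds)
      show "set ds \<subseteq> carrier G" unfolding ds_def using x by auto
      fix i assume i: "i < length ds"
      have i': "i < n" using i lends by simp
      have j': "(i+1) mod n < n" using n3 by simp
      have neq: "ds ! i \<noteq> ds ! ((i+1) mod length ds)"
      proof -
        have "i \<noteq> (i+1) mod n"
        proof (cases "i+1 < n")
          case True thus ?thesis by simp
        next
          case False
          hence "i + 1 = n" using i' by simp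
          hence "(i+1) mod n = 0" by simp
          thus ?thesis using \<open>i + 1 = n\<close> n3 by simp
        qed
        thus ?thesis using dds i j' lends by (simp add: nth_eq_iff_index_eq)
      qed
      have e1: "ds ! i = x [^]\<^bsub>G\<^esub> (K ! i)" unfolding ds_def using i' lenK by simp
      have e2: "ds ! ((i+1) mod length ds) = x [^]\<^bsub>G\<^esub> (K ! ((i+1) mod n))" unfolding ds_def using j' lenK lends by simp
      show "power_adj G (ds ! i) (ds ! ((i + 1) mod length ds))"
        unfolding e1 e2 using adj_from_relg[OF assms(1) x n_def _ relK[OF i']] neq e1 e2 n3 by simp
    qed
    have "length ds \<le> length cs" using assms(5) cyc by blast
    thus ?thesis using lends xM n_def by simp
  qed
qed

end
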